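(* Let $n\geq 4$ and let $H$ be a Hamiltonian cycle in the complete bipartite graph $K_{n,n}$. Then $G=K_{n,n}-H$ (the graph on $V(K_{n,n})$ with edge set $E(K_{n,n})\setminus E(H)$) is $2$-swappable.
   Context: For a graph $G$, $A\subseteq E(G)$ and $B\subseteq E(\bar G)$ (edges of the complement of $G$ in the complete graph on $V(G)$), $G-A+B$ denotes the graph on $V(G)$ with edge set $(E(G)\setminus A)\cup B$. $G$ is $2$-swappable if for every $e\in E(G)$ there exist $A\subseteq E(G)$ and $B\subseteq E(\bar G)$ with $e\in A$, $|A|\leq 2$, and $G\cong G-A+B$. *)

theory Defs
  imports Main
begin

text \<open>Simple graphs are represented by a vertex set V and an edge set E of
2-element subsets of V.\<close>

definition all_pairs :: "'a set \<Rightarrow> 'a set set" where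
  "all_pairs V = {{u, v} | u v. u \<in> V \<and> v \<in> V \<and> u \<noteq> v}"

definition compl_edges :: "'a set \<Rightarrow> 'a set set \<Rightarrow> 'a set set" where
  "compl_edges V E = all_pairs V - E"

definition graph_iso_on :: "'a set \<Rightarrow> 'a set set \<Rightarrow> 'a set set \<Rightarrow> bool" where
  "graph_iso_on V E E' \<longleftrightarrow>
     (\<exists>f. bij_betw f V V \<and> (\<forall>u\<in>V. \<forall>v\<in>V. {u, v} \<in> E \<longleftrightarrow> {f u, f v} \<in> E'))"

definition two_swappable :: "'a set \<Rightarrow> 'a set set \<Rightarrow> bool" where
  "two_swappable V E \<longleftrightarrow>
     (\<forall>e\<in>E. \<exists>A B. A \<subseteq> E \<and> B \<subseteq> compl_edges V E \<and> e \<in> A \<and> card A \<le> 2 \<and>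
        graph_iso_on V E ((E - A) \<union> B))"

definition Knn_verts :: "nat \<Rightarrow> (bool \<times> nat) set" where
  "Knn_verts n = UNIV \<times> {..<n}"

definition Knn_edges :: "nat \<Rightarrow> (bool \<times> nat) set set" where
  "Knn_edges n = {{(False, i), (True, j)} | i j. i < n \<and> j < n}"

definition ham_cycle :: "'a set \<Rightarrow> 'a set set \<Rightarrow> 'a set set \<Rightarrow> bool" where
  "ham_cycle V E H \<longleftrightarrow>
     (\<exists>vs. distinct vs \<and> set vs = V \<and> length vs \<ge> 3 \<and>
        H = {{vs ! i, vs ! ((i + 1) mod length vs)} | i. i < length vs} \<and> H \<subseteq> E)"

end

theory Submission
  imports Defs
begin

definition nx :: "nat \<Rightarrow> nat \<Rightarrow> nat" where "nx m a = (if a+1 = m then 0 else a+1)"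
definition adj where "adj m a b = (b = nx m a \<or> a = nx m b)"
definition eqp :: "nat\<Rightarrow>nat\<Rightarrow>nat\<Rightarrow>nat\<Rightarrow>bool" where "eqp c d p q = ((c=p\<and>d=q)\<or>(c=q\<and>d=p))"
definition sg :: "nat\<Rightarrow>nat\<Rightarrow>nat\<Rightarrow>nat" where "sg i j k = (if i<k \<and> k\<le>j then i+j+1-k else k)"

lemma K_mem: "{p,q} \<in> Knn_edges n \<longleftrightarrow> p \<in> Knn_verts n \<and> q \<in> Knn_verts n \<and> fst p \<noteq> fst q"
proof
  assume "{p,q} \<in> Knn_edges n"
  then obtain i j where "{p,q} = {(False,i),(True,j)}" "i<n" "j<n" unfolding Knn_edges_def by auto
  then show "p \<in> Knn_verts n \<and> q \<in> Knn_verts n \<and> fst p \<noteq> fst q"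
    unfolding Knn_verts_def by (auto simp: doubleton_eq_iff)
next
  assume h: "p \<in> Knn_verts n \<and> q \<in> Knn_verts n \<and> fst p \<noteq> fst q"
  obtain a x where p: "p = (a,x)" by (cases p)
  obtain b y where q: "q = (b,y)" by (cases q)
  show "{p,q} \<in> Knn_edges n"
  proof (cases a)
    case True
    then have "{p,q} = {(False,y),(True,x)}" using h p q by auto
    then show ?thesis using h p q unfolding Knn_edges_def Knn_verts_def by auto
  next
    case False
    then have "{p,q} = {(False,x),(True,y)}" using h p q by auto
    then show ?thesis using h p q unfolding Knn_edges_def Knn_verts_def by auto
  qed
qed

lemma nx_mod: "k < m \<Longrightarrow> (k+1) mod m = nx m k"
  unfolding nx_def by auto

lemma nx_lt: "k < m \<Longrightarrow> nx m k < m"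
  unfolding nx_def by auto

lemma dbl_eq:
  assumes "distinct vs" "a < length vs" "b < length vs" "p < length vs" "q < length vs"
  shows "{vs!a,vs!b} = {vs!p,vs!q} \<longleftrightarrow> eqp a b p q"
  using assms unfolding eqp_def doubleton_eq_iff by (simp add: nth_eq_iff_index_eq)

lemma H_mem:
  assumes "distinct vs" "a < length vs" "b < length vs"
    "H = {{vs ! i, vs ! ((i + 1) mod length vs)} | i. i < length vs}"
  shows "{vs!a,vs!b} \<in> H \<longleftrightarrow> adj (length vs) a b"
proof -
  let ?m = "length vs"
  have "{vs!a,vs!b} \<in> H \<longleftrightarrow> (\<exists>k<?m. {vs!a,vs!b} = {vs!k, vs!nx ?m k})"
  proof
    assume "{vs!a,vs!b} \<in> H"
    then obtain k where "k < ?m" "{vs!a,vs!b} = {vs!k, vs!((k+1) mod ?m)}" using assms(4) by blast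
    then show "\<exists>k<?m. {vs!a,vs!b} = {vs!k, vs!nx ?m k}" using nx_mod by metis
  next
    assume "\<exists>k<?m. {vs!a,vs!b} = {vs!k, vs!nx ?m k}"
    then obtain k where "k < ?m" "{vs!a,vs!b} = {vs!k, vs!nx ?m k}" by blast
    then have "{vs!a,vs!b} = {vs!k, vs!((k+1) mod ?m)}" using nx_mod by metis
    then show "{vs!a,vs!b} \<in> H" using assms(4) \<open>k < ?m\<close> by blast
  qed
  also have "\<dots> \<longleftrightarrow> (\<exists>k<?m. eqp a b k (nx ?m k))"
    using assms dbl_eq nx_lt by (metis (no_types, lifting))
  also have "\<dots> \<longleftrightarrow> adj ?m a b"
    unfolding adj_def eqp_def using assms(2,3) by auto
  finally show ?thesis .
qed

lemma side:
  assumes "\<And>k. k < length vs \<Longrightarrow> fst (vs!k) \<noteq> fst (vs ! nx (length vs) k)"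
  shows "k < length vs \<Longrightarrow> fst (vs!k) = (if even k then fst (vs!0) else \<not> fst (vs!0))"
proof (induction k)
  case 0 then show ?case by simp
next
  case (Suc k)
  then have "fst (vs!k) \<noteq> fst (vs ! nx (length vs) k)" using assms by simp
  moreover have "nx (length vs) k = Suc k" using Suc.prems unfolding nx_def by auto
  ultimately show ?case using Suc by auto
qed

lemma sg_lt: "i < j \<Longrightarrow> j < m \<Longrightarrow> k < m \<Longrightarrow> sg i j k < m"
  unfolding sg_def by auto

lemma sg_sg: "i < j \<Longrightarrow> j < m \<Longrightarrow> k < m \<Longrightarrow> sg i j (sg i j k) = k"
  unfolding sg_def by auto

lemma edge_inj: "l<m \<Longrightarrow> k<m \<Longrightarrow> 3\<le>m \<Longrightarrow> eqp l (nx m l) k (nx m k) \<Longrightarrow> l = k"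
  unfolding eqp_def nx_def by (auto split: if_splits)

lemma sg_par1: assumes "odd (i+j)" shows "even (sg i j a + a)"
proof (cases "i<a \<and> a \<le> j")
  case True
  then have "sg i j a + a = i+j+1" unfolding sg_def by auto
  then show ?thesis using assms by simp
next
  case False
  then show ?thesis unfolding sg_def by auto
qed

lemma sg_par: "odd (i+j) \<Longrightarrow> odd (sg i j a + sg i j b) \<longleftrightarrow> odd (a+b)"
proof -
  assume h: "odd (i+j)"
  have "even (sg i j a + a)" "even (sg i j b + b)" using sg_par1[OF h] by auto
  then show ?thesis by presburger
qed

lemma sg_inj: "i<j \<Longrightarrow> j<m \<Longrightarrow> a<m \<Longrightarrow> b<m \<Longrightarrow> sg i j a = sg i j b \<Longrightarrow> a = b"
  by (metis sg_sg)

lemma pairI: "u\<in>V \<Longrightarrow> v\<in>V \<Longrightarrow> u\<noteq>v \<Longrightarrow> {u,v} \<in> all_pairs V"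
  unfolding all_pairs_def by blast

theorem mainTheorem6:
  fixes n :: nat and H :: "(bool \<times> nat) set set"
  assumes "n \<ge> 4"
    and "ham_cycle (Knn_verts n) (Knn_edges n) H"
  shows "two_swappable (Knn_verts n) (Knn_edges n - H)"
proof -
  define V where "V = Knn_verts n"
  define K where "K = Knn_edges n"
  obtain vs where dv: "distinct vs" and sv: "set vs = V" and l3: "length vs \<ge> 3"
    and Hd: "H = {{vs ! i, vs ! ((i + 1) mod length vs)} | i. i < length vs}" and HK: "H \<subseteq> K"
    using assms(2) unfolding ham_cycle_def V_def K_def by blast
  define m where "m = length vs"
  have Hm: "\<And>a b. a < m \<Longrightarrow> b < m \<Longrightarrow> {vs!a,vs!b} \<in> H \<longleftrightarrow> adj m a b"
    using H_mem[OF dv _ _ Hd] m_def by simp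
  have inV: "\<And>a. a < m \<Longrightarrow> vs!a \<in> V" using sv m_def by auto
  have Km0: "\<And>a b. a < m \<Longrightarrow> b < m \<Longrightarrow> {vs!a,vs!b} \<in> K \<longleftrightarrow> fst (vs!a) \<noteq> fst (vs!b)"
    using K_mem inV unfolding K_def V_def by blast
  have adjK: "\<And>k. k < length vs \<Longrightarrow> fst (vs!k) \<noteq> fst (vs ! nx (length vs) k)"
  proof -
    fix k assume k: "k < length vs"
    have "adj m k (nx m k)" unfolding adj_def by simp
    then have "{vs!k, vs!nx m k} \<in> K" using Hm HK k m_def nx_lt by blast
    then show "fst (vs!k) \<noteq> fst (vs ! nx (length vs) k)" using Km0 k m_def nx_lt by blast
  qed
  have Km: "\<And>a b. a < m \<Longrightarrow> b < m \<Longrightarrow> {vs!a,vs!b} \<in> K \<longleftrightarrow> odd (a+b)"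
  proof -
    fix a b assume "a < m" "b < m"
    then show "{vs!a,vs!b} \<in> K \<longleftrightarrow> odd (a+b)"
      using Km0 side[OF adjK] m_def by auto
  qed
  have evm: "even m"
  proof -
    have "m - 1 < m" "0 < m" using l3 m_def by auto
    moreover have "adj m (m-1) 0" unfolding adj_def nx_def using l3 m_def by auto
    ultimately have "{vs!(m-1), vs!0} \<in> K" using Hm HK by blast
    then have "odd (m - 1 + 0)" using Km \<open>m-1<m\<close> \<open>0<m\<close> by blast
    then show ?thesis using l3 m_def by auto
  qed
  define idx where "idx u = (SOME k. k < m \<and> vs!k = u)" for u
  have idx_nth: "\<And>k. k < m \<Longrightarrow> idx (vs!k) = k"
    unfolding idx_def using dv m_def by (auto intro!: some_equality simp: nth_eq_iff_index_eq)
  have idxV: "\<And>u. u \<in> V \<Longrightarrow> idx u < m \<and> vs ! idx u = u"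
  proof -
    fix u assume "u \<in> V"
    then have "u \<in> set vs" using sv by simp
    then obtain k where "k < m" "vs!k = u" unfolding m_def by (metis in_set_conv_nth)
    then show "idx u < m \<and> vs ! idx u = u" using idx_nth by auto
  qed
  show ?thesis unfolding two_swappable_def
  proof
    fix e assume eE: "e \<in> Knn_edges n - H"
    then have "e \<in> K" "e \<notin> H" using K_def by auto
    then obtain x y where exy: "e = {(False,x),(True,y)}" "x<n" "y<n"
      unfolding K_def Knn_edges_def by blast
    define p where "p = (False,x)"
    define q where "q = (True,y)"
    have e: "e = {p,q}" "p \<in> V" "q \<in> V" "fst p \<noteq> fst q"
      using exy unfolding p_def q_def V_def Knn_verts_def by auto
    obtain a0 where a0: "a0 < m" "vs!a0 = p" using idxV e by blast
    obtain b0 where b0: "b0 < m" "vs!b0 = q" using idxV e by blast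
    have "a0 \<noteq> b0" using a0 b0 e by auto
    define i where "i = min a0 b0"
    define j where "j = max a0 b0"
    have ij: "i < j" "j < m" using a0 b0 \<open>a0 \<noteq> b0\<close> i_def j_def by auto
    have e2: "e = {vs!i, vs!j}" using e a0 b0 i_def j_def by (auto simp: min_def max_def insert_commute)
    have oij: "odd (i+j)" using Km ij e2 \<open>e \<in> K\<close> by auto
    have nadj: "\<not> adj m i j" using Hm ij e2 \<open>e \<notin> H\<close> by auto
    have i1: "i+1 < m" using ij by auto
    have nj: "nx m j < m" using ij nx_lt by auto
    define f where "f = {vs!(i+1), vs!(nx m j)}"
    define g where "g = {vs!i, vs!(i+1)}"
    define h where "h = {vs!j, vs!(nx m j)}"
    define A where "A = {e, f}"
    define B where "B = {g, h}"
    have fK: "f \<in> K - H"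
    proof -
      have "adj m i j = adj m (i+1) (nx m j)" unfolding adj_def nx_def using ij by auto
      moreover have "odd (i + 1 + nx m j)" using oij evm ij unfolding nx_def by auto
      ultimately show ?thesis using Km[OF i1 nj] Hm[OF i1 nj] nadj f_def by auto
    qed
    have AE: "A \<subseteq> Knn_edges n - H" using A_def fK eE K_def by auto
    have gH: "g \<in> H" using Hm[of i "i+1"] i1 ij g_def unfolding adj_def nx_def by auto
    have hH: "h \<in> H" using Hm[OF _ nj, of j] ij h_def unfolding adj_def by auto
    have "vs!i \<noteq> vs!(i+1)" using dv i1 ij m_def by (simp add: nth_eq_iff_index_eq)
    then have gP: "g \<in> all_pairs V" unfolding g_def using inV[OF i1] inV ij by (intro pairI) auto
    have "nx m j \<noteq> j" unfolding nx_def using ij by auto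
    then have "vs!j \<noteq> vs!(nx m j)" using dv nj ij m_def by (simp add: nth_eq_iff_index_eq)
    then have hP: "h \<in> all_pairs V" unfolding h_def using inV[OF nj] inV ij by (intro pairI) auto
    have BC: "B \<subseteq> compl_edges (Knn_verts n) (Knn_edges n - H)"
      unfolding compl_edges_def B_def using gH hH gP hP V_def by auto
    have cA: "card A \<le> 2" unfolding A_def by (simp add: card_insert_if)
    define T where "T = ((K - H) - A) \<union> B"
    define \<sigma> where "\<sigma> = sg i j"
    define edge where "edge k = {vs!k, vs!nx m k}" for k
    define e' where "e' k = {vs!\<sigma> k, vs!\<sigma> (nx m k)}" for k
    define H' where "H' = e' ` {..<m}"
    have Hed: "H = edge ` {..<m}" unfolding Hd edge_def m_def using nx_mod
      by (auto simp: image_def)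
    have edinj: "\<And>k l. k<m \<Longrightarrow> l<m \<Longrightarrow> edge k = edge l \<Longrightarrow> k = l"
    proof -
      fix k l assume kl: "k<m" "l<m" "edge k = edge l"
      then have "eqp k (nx m k) l (nx m l)" using dbl_eq[OF dv] nx_lt m_def edge_def by simp
      then show "k = l" using edge_inj kl l3 m_def by blast
    qed
    have ge: "g = edge i" unfolding g_def edge_def nx_def using ij by auto
    have he: "h = edge j" unfolding h_def edge_def by simp
    have E1: "e' i = e" unfolding e'_def e2 \<sigma>_def sg_def nx_def using ij by auto
    have E2: "e' j = f" unfolding e'_def f_def \<sigma>_def sg_def nx_def using ij by auto
    have E3: "\<And>k. k<i \<or> (j<k \<and> k<m) \<Longrightarrow> e' k = edge k"
      unfolding e'_def edge_def \<sigma>_def sg_def nx_def using ij by auto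
    have E4: "\<And>k. i<k \<Longrightarrow> k<j \<Longrightarrow> e' k = edge (i+j-k)"
    proof -
      fix k assume k: "i<k" "k<j"
      have "\<sigma> k = i+j+1-k" unfolding \<sigma>_def sg_def using k by auto
      moreover have "\<sigma> (nx m k) = i+j-k" unfolding \<sigma>_def sg_def nx_def using k ij by auto
      moreover have "nx m (i+j-k) = i+j+1-k" unfolding nx_def using k ij by auto
      ultimately show "e' k = edge (i+j-k)" unfolding e'_def edge_def by (simp add: insert_commute)
    qed
    have eH: "e \<notin> H" using \<open>e \<notin> H\<close> .
    have fH: "f \<notin> H" using fK by auto
    have H'eq: "H' = (H - {g,h}) \<union> {e,f}"
    proof
      show "H' \<subseteq> (H - {g,h}) \<union> {e,f}"
      proof
        fix x assume "x \<in> H'"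
        then obtain k where k: "k<m" "x = e' k" unfolding H'_def by auto
        consider "k<i \<or> (j<k \<and> k<m)" | "k = i" | "i<k \<and> k<j" | "k = j" using k ij by linarith
        then show "x \<in> (H - {g,h}) \<union> {e,f}"
        proof cases
          case 1
          then have "x = edge k" using E3 k by auto
          moreover have "k \<noteq> i" "k \<noteq> j" "i < m" using 1 ij by auto
          moreover have "edge k \<noteq> g" using edinj[OF k(1) \<open>i<m\<close>] ge \<open>k \<noteq> i\<close> by auto
          moreover have "edge k \<noteq> h" using edinj[OF k(1) ij(2)] he \<open>k \<noteq> j\<close> by auto
          ultimately show ?thesis using Hed k by auto
        next
          case 2 then show ?thesis using E1 k by auto
        next
          case 3
          then have "x = edge (i+j-k)" using E4 k by auto
          moreover have "i+j-k < m" "i+j-k \<noteq> i" "i+j-k \<noteq> j" using 3 ij by auto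
          moreover have "i < m" using ij by auto
          ultimately show ?thesis using Hed edinj ge he ij by auto
        next
          case 4 then show ?thesis using E2 k by auto
        qed
      qed
    next
      show "(H - {g,h}) \<union> {e,f} \<subseteq> H'"
      proof
        fix x assume x: "x \<in> (H - {g,h}) \<union> {e,f}"
        show "x \<in> H'"
        proof (cases "x \<in> {e,f}")
          case True
          then show ?thesis unfolding H'_def using E1 E2 ij by force
        next
          case False
          then have "x \<in> H" "x \<noteq> g" "x \<noteq> h" using x by auto
          then obtain l where l: "l<m" "x = edge l" using Hed by auto
          have "l \<noteq> i" "l \<noteq> j" using l \<open>x \<noteq> g\<close> \<open>x \<noteq> h\<close> ge he by auto
          then consider "l<i \<or> (j<l \<and> l<m)" | "i<l \<and> l<j" using l by linarith
          then show ?thesis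
          proof cases
            case 1 then show ?thesis unfolding H'_def using E3 l by force
          next
            case 2
            then have "e' (i+j-l) = edge l" using E4[of "i+j-l"] by auto
            moreover have "i+j-l < m" using 2 ij by auto
            ultimately show ?thesis unfolding H'_def using l by force
          qed
        qed
      qed
    qed
    have TK: "T = K - H'"
    proof -
      have "A \<subseteq> K - H" using AE K_def by simp
      moreover have "B \<subseteq> H" using gH hH B_def by auto
      ultimately show ?thesis unfolding T_def H'eq A_def[symmetric] B_def[symmetric] using HK by blast
    qed
    have H'm: "\<And>a b. a<m \<Longrightarrow> b<m \<Longrightarrow> {vs!\<sigma> a, vs!\<sigma> b} \<in> H' \<longleftrightarrow> {vs!a, vs!b} \<in> H"
    proof -
      fix a b assume ab: "a<m" "b<m"
      have sl: "\<And>k. k<m \<Longrightarrow> \<sigma> k < m" unfolding \<sigma>_def using sg_lt ij by blast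
      have "{vs!\<sigma> a, vs!\<sigma> b} \<in> H' \<longleftrightarrow> (\<exists>k<m. {vs!\<sigma> a, vs!\<sigma> b} = e' k)"
        unfolding H'_def by auto
      also have "\<dots> \<longleftrightarrow> (\<exists>k<m. eqp (\<sigma> a) (\<sigma> b) (\<sigma> k) (\<sigma> (nx m k)))"
      proof -
        have "\<forall>k<m. {vs!\<sigma> a, vs!\<sigma> b} = e' k \<longleftrightarrow> eqp (\<sigma> a) (\<sigma> b) (\<sigma> k) (\<sigma> (nx m k))"
          unfolding e'_def using dbl_eq[OF dv] sl ab nx_lt m_def by auto
        then show ?thesis by blast
      qed
      also have "\<dots> \<longleftrightarrow> (\<exists>k<m. eqp a b k (nx m k))"
        unfolding eqp_def using sg_inj[OF ij] ab nx_lt \<sigma>_def by metis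
      also have "\<dots> \<longleftrightarrow> (\<exists>k<m. {vs!a, vs!b} = edge k)"
      proof -
        have "\<forall>k<m. {vs!a, vs!b} = edge k \<longleftrightarrow> eqp a b k (nx m k)"
          unfolding edge_def using dbl_eq[OF dv] ab nx_lt m_def by auto
        then show ?thesis by blast
      qed
      also have "\<dots> \<longleftrightarrow> {vs!a, vs!b} \<in> H"
        unfolding Hed by auto
      finally show "{vs!\<sigma> a, vs!\<sigma> b} \<in> H' \<longleftrightarrow> {vs!a, vs!b} \<in> H" .
    qed
    define \<phi> where "\<phi> u = vs ! sg i j (idx u)" for u
    have phin: "\<And>k. k < m \<Longrightarrow> \<phi> (vs!k) = vs ! sg i j k" using idx_nth \<phi>_def by simp
    have bij: "bij_betw \<phi> V V"
    proof (rule bij_betw_byWitness[where f'=\<phi>])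
      show "\<forall>a\<in>V. \<phi> (\<phi> a) = a"
      proof
        fix u assume "u \<in> V"
        then have "idx u < m" "vs ! idx u = u" using idxV by auto
        then show "\<phi> (\<phi> u) = u" using phin sg_sg sg_lt ij by metis
      qed
      then show "\<forall>a\<in>V. \<phi> (\<phi> a) = a" .
      show "\<phi> ` V \<subseteq> V"
      proof
        fix x assume "x \<in> \<phi> ` V"
        then obtain u where "u \<in> V" "x = \<phi> u" by auto
        then show "x \<in> V" using idxV inV sg_lt ij \<phi>_def by auto
      qed
      then show "\<phi> ` V \<subseteq> V" .
    qed
    have iso: "\<forall>u\<in>V. \<forall>v\<in>V. {u, v} \<in> Knn_edges n - H \<longleftrightarrow> {\<phi> u, \<phi> v} \<in> T"
    proof (intro ballI)
      fix u v assume "u \<in> V" "v \<in> V"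
      then obtain a b where ab: "a < m" "b < m" "u = vs!a" "v = vs!b" using idxV by metis
      have "{u, v} \<in> Knn_edges n - H \<longleftrightarrow> odd (a+b) \<and> {vs!a, vs!b} \<notin> H"
        using Km[OF ab(1,2)] ab K_def by auto
      also have "\<dots> \<longleftrightarrow> {vs ! sg i j a, vs ! sg i j b} \<in> T"
        unfolding TK using Km[OF sg_lt[OF ij ab(1)] sg_lt[OF ij ab(2)]] sg_par[OF oij] H'm[OF ab(1,2)] \<sigma>_def
        by auto
      also have "\<dots> \<longleftrightarrow> {\<phi> u, \<phi> v} \<in> T" using phin ab by simp
      finally show "{u, v} \<in> Knn_edges n - H \<longleftrightarrow> {\<phi> u, \<phi> v} \<in> T" .
    qed
    have "graph_iso_on (Knn_verts n) (Knn_edges n - H) ((Knn_edges n - H - A) \<union> B)"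
      unfolding graph_iso_on_def using bij iso V_def T_def K_def by blast
    then show "\<exists>A B. A \<subseteq> Knn_edges n - H \<and> B \<subseteq> compl_edges (Knn_verts n) (Knn_edges n - H) \<and>
       e \<in> A \<and> card A \<le> 2 \<and> graph_iso_on (Knn_verts n) (Knn_edges n - H) ((Knn_edges n - H - A) \<union> B)"
      using AE BC cA A_def by blast
  qed
qed
end
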